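(* Let $k,m>1$ be integers and $g\in S_{km}$ acting on $\{1,\dots,km\}$. Then $g$ preserves some partition of $\{1,\dots,km\}$ into $k$ blocks each of size $m$ (equivalently, $g$ lies in an imprimitive permutation group with $k$ blocks of size $m$) if and only if the cycle partition of $g$ (the multiset of its cycle lengths, fixed points counted as cycles of length $1$) is an i-partition of type $(k,m)$.
   Context: Let $k,m$ be positive integers. If $(m_1,\dots,m_l)$ is a partition of $m$, then the partition $(km_1,\dots,km_l)$ of $km$ is called an ic-partition of type $(k,m)$. For a partition $P$, a clustering of $P$ is a partition of the multiset of parts of $P$ into sub-multisets $P_1,\dots,P_r$ (called clusters), each regarded as a partition of the sum of its elements. A partition of $km$ is an i-partition of type $(k,m)$ if it has a clustering $P_1,\dots,P_r$ and there is a partition $(k_1,\dots,k_r)$ of $k$ such that, for each $i$, $P_i$ is an ic-partition (of $k_im$) of type $(k_i,m)$. *)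

theory Defs
  imports "HOL-Combinatorics.Combinatorics" "HOL-Library.Multiset" "HOL-Library.Disjoint_Sets"
begin

definition is_int_partition :: "nat \<Rightarrow> nat multiset \<Rightarrow> bool" where
  "is_int_partition n P \<longleftrightarrow> (\<forall>x\<in>#P. 0 < x) \<and> sum_mset P = n"

definition ic_partition :: "nat \<Rightarrow> nat \<Rightarrow> nat multiset \<Rightarrow> bool" where
  "ic_partition k m P \<longleftrightarrow> (\<exists>Q. is_int_partition m Q \<and> P = image_mset (\<lambda>x. k * x) Q)"

text \<open>i-partition of type (k,m): a clustering P = P_1 + ... + P_r (clusters nonempty) together
  with a partition (k_1,...,k_r) of k such that each P_i is an ic-partition of type (k_i,m).
  The clustering is encoded as a multiset of pairs (k_i, P_i).\<close>
definition i_partition :: "nat \<Rightarrow> nat \<Rightarrow> nat multiset \<Rightarrow> bool" where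
  "i_partition k m P \<longleftrightarrow>
     (\<exists>C :: (nat \<times> nat multiset) multiset.
        (\<forall>c\<in>#C. snd c \<noteq> {#} \<and> ic_partition (fst c) m (snd c)) \<and>
        is_int_partition k (image_mset fst C) \<and>
        sum_mset (image_mset snd C) = P)"

definition cycle_partition :: "('a \<Rightarrow> 'a) \<Rightarrow> 'a set \<Rightarrow> nat multiset" where
  "cycle_partition g A = image_mset card (mset_set ((\<lambda>x. orbit g x) ` A))"

definition preserves_block_system :: "('a \<Rightarrow> 'a) \<Rightarrow> 'a set \<Rightarrow> nat \<Rightarrow> nat \<Rightarrow> bool" where
  "preserves_block_system g A k m \<longleftrightarrow>
     (\<exists>B. partition_on A B \<and> card B = k \<and> (\<forall>b\<in>B. card b = m) \<and> (\<forall>b\<in>B. g ` b \<in> B))"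

end

theory Submission
  imports Defs
begin


lemma perm_inj: "permutation g \<Longrightarrow> inj g"
  using permutation_bijective bij_is_inj by blast

lemma orbit_period:
  assumes "permutation g"
  shows "card (orbit g x) > 0" "(g ^^ card (orbit g x)) x = x"
        "(g ^^ i) x = x \<longleftrightarrow> card (orbit g x) dvd i"
proof -
  have xo: "x \<in> orbit g x" using permutation_self_in_orbit[OF assms] .
  define p where "p = funpow_dist1 g x x"
  have oe: "orbit g x = (\<lambda>n. (g ^^ n) x) ` {0..<p}"
    unfolding p_def by (rule orbit_conv_funpow_dist1[OF xo])
  have "inj_on (\<lambda>n. (g ^^ n) x) {0..<p}" unfolding p_def by (rule inj_on_funpow_dist1[OF xo])
  hence cp: "card (orbit g x) = p" using oe card_image by fastforce
  show "card (orbit g x) > 0" using cp p_def by simp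
  have pp: "(g ^^ p) x = x" unfolding p_def by (rule funpow_dist1_prop[OF xo])
  thus "(g ^^ card (orbit g x)) x = x" using cp by simp
  show "(g ^^ i) x = x \<longleftrightarrow> card (orbit g x) dvd i"
  proof
    assume h: "(g ^^ i) x = x"
    have "(g ^^ (i mod p)) x = x" using funpow_mod_eq[where f=g and n=p and x=x and m=i, OF pp] h by simp
    moreover have "i mod p < p" using p_def by simp
    ultimately have "i mod p = 0"
      using funpow_dist1_least[of "i mod p" g x x] unfolding p_def by (metis neq0_conv)
    thus "card (orbit g x) dvd i" using cp by auto
  next
    assume "card (orbit g x) dvd i"
    then obtain q where "i = p * q" using cp by auto
    moreover have "(g ^^ (p * q)) x = x"
      by (induction q) (simp_all add: funpow_add pp)
    ultimately show "(g ^^ i) x = x" by simp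
  qed
qed

lemma orbit_funpow_cong:
  assumes "permutation g" "(g ^^ i) x = (g ^^ j) x"
  shows "i mod card (orbit g x) = j mod card (orbit g x)"
proof -
  have key: "a mod card (orbit g x) = (a + c) mod card (orbit g x)"
    if "(g ^^ a) x = (g ^^ (a + c)) x" for a c
  proof -
    have "(g ^^ (a + c)) x = (g ^^ a) ((g ^^ c) x)" by (simp add: funpow_add)
    hence "(g ^^ a) ((g ^^ c) x) = (g ^^ a) x" using that by simp
    moreover have "inj (g ^^ a)" using inj_fn[OF perm_inj[OF assms(1)]] by blast
    ultimately have "(g ^^ c) x = x" unfolding inj_def by blast
    hence "card (orbit g x) dvd c" using orbit_period(3)[OF assms(1)] by blast
    then obtain q where "c = card (orbit g x) * q" by auto
    thus ?thesis by simp
  qed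
  show ?thesis
  proof (cases "i \<le> j")
    case True
    then obtain c where "j = i + c" using le_iff_add by blast
    thus ?thesis using key[of i c] assms(2) by simp
  next
    case False
    then obtain c where "i = j + c" using le_iff_add[of j i] by auto
    thus ?thesis using key[of j c] assms(2) by simp
  qed
qed

lemma orbit_eq_of_mem:
  assumes "permutation g" "y \<in> orbit g x" shows "orbit g y = orbit g x"
  by (rule orbit_cyclic_eq3[OF cyclic_on_orbit'[OF assms(1)] assms(2)])

lemma orbit_subset_inv:
  assumes "g ` A \<subseteq> A" "x \<in> A" shows "orbit g x \<subseteq> A"
proof
  fix y assume "y \<in> orbit g x" thus "y \<in> A"
    by (induction rule: orbit.induct) (use assms in auto)
qed

lemma orbit_disj:
  assumes "permutation g" "orbit g x \<inter> orbit g y \<noteq> {}" shows "orbit g x = orbit g y"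
proof -
  obtain z where z: "z \<in> orbit g x" "z \<in> orbit g y" using assms(2) by blast
  show ?thesis using orbit_eq_of_mem[OF assms(1) z(1)] orbit_eq_of_mem[OF assms(1) z(2)] by simp
qed



lemma cp_union:
  assumes "permutation g" "finite A1" "finite A2" "A1 \<inter> A2 = {}" "g ` A1 \<subseteq> A1" "g ` A2 \<subseteq> A2"
  shows "cycle_partition g (A1 \<union> A2) = cycle_partition g A1 + cycle_partition g A2"
proof -
  have d: "orbit g ` A1 \<inter> orbit g ` A2 = {}"
  proof (rule ccontr)
    assume "orbit g ` A1 \<inter> orbit g ` A2 \<noteq> {}"
    then obtain x y where xy: "x \<in> A1" "y \<in> A2" "orbit g x = orbit g y" by auto
    have "x \<in> orbit g y" using xy(3) permutation_self_in_orbit[OF assms(1)] by metis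
    hence "x \<in> A2" using orbit_subset_inv[OF assms(6) xy(2)] by blast
    thus False using xy(1) assms(4) by blast
  qed
  show ?thesis unfolding cycle_partition_def image_Un
    using mset_set_Union[OF _ _ d] assms(2,3) by simp
qed

lemma cp_sum:
  assumes "permutation g" "finite A" "g ` A \<subseteq> A"
  shows "sum_mset (cycle_partition g A) = card A"
proof -
  have U: "\<Union>(orbit g ` A) = A"
    using orbit_subset_inv[OF assms(3)] permutation_self_in_orbit[OF assms(1)] by blast
  have pd: "pairwise disjnt (orbit g ` A)"
    unfolding pairwise_def disjnt_def using orbit_disj[OF assms(1)] by blast
  have fin: "\<And>X. X \<in> orbit g ` A \<Longrightarrow> finite X"
    using U assms(2) by (metis Union_upper finite_subset)
  have "card A = sum card (orbit g ` A)" using card_Union_disjoint[OF pd fin] U by simp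
  thus ?thesis unfolding cycle_partition_def by (simp add: sum_unfold_sum_mset)
qed

lemma cp_mem:
  assumes "finite A"
  shows "n \<in># cycle_partition g A \<longleftrightarrow> (\<exists>x\<in>A. n = card (orbit g x))"
  using assms unfolding cycle_partition_def by auto

lemma cp_empty:
  assumes "finite A"
  shows "cycle_partition g A = {#} \<longleftrightarrow> A = {}"
  using assms unfolding cycle_partition_def by (auto simp: mset_set_empty_iff)

lemma ip_add:
  assumes "i_partition k1 m P1" "i_partition k2 m P2"
  shows "i_partition (k1 + k2) m (P1 + P2)"
proof -
  obtain C1 where C1: "\<forall>c\<in>#C1. snd c \<noteq> {#} \<and> ic_partition (fst c) m (snd c)"
     "is_int_partition k1 (image_mset fst C1)" "sum_mset (image_mset snd C1) = P1"
    using assms(1) unfolding i_partition_def by blast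
  obtain C2 where C2: "\<forall>c\<in>#C2. snd c \<noteq> {#} \<and> ic_partition (fst c) m (snd c)"
     "is_int_partition k2 (image_mset fst C2)" "sum_mset (image_mset snd C2) = P2"
    using assms(2) unfolding i_partition_def by blast
  show ?thesis unfolding i_partition_def
    apply (rule exI[of _ "C1 + C2"])
    using C1 C2 by (auto simp: is_int_partition_def)
qed

lemma ip_single:
  assumes "d > 0" "P \<noteq> {#}" "ic_partition d m P"
  shows "i_partition d m P"
  unfolding i_partition_def
  apply (rule exI[of _ "{#(d, P)#}"])
  using assms by (auto simp: is_int_partition_def)

lemma ip_empty: "i_partition 0 m {#}"
  unfolding i_partition_def
  by (rule exI[of _ "{#}"]) (auto simp: is_int_partition_def)

lemma pbs_empty: "preserves_block_system g {} 0 m"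
  unfolding preserves_block_system_def by (rule exI[of _ "{}"]) (auto simp: partition_on_empty)

lemma pbs_union:
  assumes "finite A1" "finite A2" "A1 \<inter> A2 = {}"
    "preserves_block_system g A1 k1 m" "preserves_block_system g A2 k2 m"
  shows "preserves_block_system g (A1 \<union> A2) (k1 + k2) m"
proof -
  obtain B1 where B1: "partition_on A1 B1" "card B1 = k1" "\<forall>b\<in>B1. card b = m" "\<forall>b\<in>B1. g ` b \<in> B1"
    using assms(4) unfolding preserves_block_system_def by blast
  obtain B2 where B2: "partition_on A2 B2" "card B2 = k2" "\<forall>b\<in>B2. card b = m" "\<forall>b\<in>B2. g ` b \<in> B2"
    using assms(5) unfolding preserves_block_system_def by blast
  have "B1 \<subseteq> Pow A1" using B1(1) unfolding partition_on_def by blast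
  hence f1: "finite B1" using assms(1) finite_subset by blast
  have "B2 \<subseteq> Pow A2" using B2(1) unfolding partition_on_def by blast
  hence f2: "finite B2" using assms(2) finite_subset by blast
  have dj: "B1 \<inter> B2 = {}"
  proof (rule ccontr)
    assume "B1 \<inter> B2 \<noteq> {}"
    then obtain b where b: "b \<in> B1" "b \<in> B2" by blast
    have "b \<noteq> {}" using b(1) B1(1) unfolding partition_on_def by blast
    moreover have "b \<subseteq> A1" "b \<subseteq> A2" using b B1(1) B2(1) unfolding partition_on_def by blast+
    ultimately show False using assms(3) by blast
  qed
  have "partition_on (A1 \<union> A2) (B1 \<union> B2)"
    unfolding partition_on_def disjoint_def
  proof (intro conjI ballI impI)
    show "\<Union>(B1 \<union> B2) = A1 \<union> A2" using B1(1) B2(1) unfolding partition_on_def by blast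
    show "{} \<notin> B1 \<union> B2" using B1(1) B2(1) unfolding partition_on_def by blast
  next
    fix a b assume ab: "a \<in> B1 \<union> B2" "b \<in> B1 \<union> B2" "a \<noteq> b"
    have s1: "\<And>x. x \<in> B1 \<Longrightarrow> x \<subseteq> A1" using B1(1) unfolding partition_on_def by blast
    have s2: "\<And>x. x \<in> B2 \<Longrightarrow> x \<subseteq> A2" using B2(1) unfolding partition_on_def by blast
    have d1: "disjoint B1" "disjoint B2" using B1(1) B2(1) unfolding partition_on_def by blast+
    show "a \<inter> b = {}"
    proof (cases "a \<in> B1")
      case True
      show ?thesis
      proof (cases "b \<in> B1")
        case True
        thus ?thesis using \<open>a \<in> B1\<close> ab(3) d1(1) unfolding disjoint_def by blast
      next
        case False
        hence "b \<subseteq> A2" using ab(2) s2 by blast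
        moreover have "a \<subseteq> A1" using True s1 by blast
        ultimately show ?thesis using assms(3) by blast
      qed
    next
      case False
      hence aB2: "a \<in> B2" using ab(1) by blast
      show ?thesis
      proof (cases "b \<in> B2")
        case True
        thus ?thesis using aB2 ab(3) d1(2) unfolding disjoint_def by blast
      next
        case False
        hence "b \<subseteq> A1" using ab(2) s1 by blast
        moreover have "a \<subseteq> A2" using aB2 s2 by blast
        ultimately show ?thesis using assms(3) by blast
      qed
    qed
  qed
  moreover have "card (B1 \<union> B2) = k1 + k2" using card_Un_disjoint[OF f1 f2 dj] B1(2) B2(2) by simp
  ultimately show ?thesis unfolding preserves_block_system_def
    using B1 B2 by (intro exI[of _ "B1 \<union> B2"]) auto
qed



lemma single_cluster_blocks:
  assumes perm: "permutation g" and fin: "finite A" and inv: "g ` A \<subseteq> A"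
    and d0: "0 < d" and m0: "0 < m"
    and cp: "cycle_partition g A = image_mset (\<lambda>x. d * x) Q" and Qp: "is_int_partition m Q"
  shows "preserves_block_system g A d m"
proof -
  have injg: "inj g" using perm_inj[OF perm] .
  have gA: "g ` A = A" using endo_inj_surj[OF fin inv] injg inj_on_subset by blast
  have dvd: "d dvd card (orbit g y)" if "y \<in> A" for y
  proof -
    have "card (orbit g y) \<in># cycle_partition g A" using cp_mem[OF fin] that by blast
    thus ?thesis using cp by auto
  qed
  define rep where "rep y = (SOME r. r \<in> orbit g y)" for y
  have rep_in: "rep y \<in> orbit g y" for y
    unfolding rep_def using permutation_self_in_orbit[OF perm] by (rule someI)
  have rep_g: "rep (g y) = rep y" for y
    unfolding rep_def using permutation_orbit_step[OF perm] by simp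
  have orep: "orbit g (rep y) = orbit g y" for y using orbit_eq_of_mem[OF perm rep_in] .
  have y_in: "y \<in> orbit g (rep y)" for y using orep permutation_self_in_orbit[OF perm] by simp
  define col where "col y = funpow_dist g (rep y) y mod d" for y
  have col_lt: "col y < d" for y unfolding col_def using d0 by simp
  have col_g: "col (g y) = Suc (col y) mod d" if "y \<in> A" for y
  proof -
    define r where "r = rep y"
    define j where "j = funpow_dist g r y"
    define j' where "j' = funpow_dist g r (g y)"
    have "g y \<in> orbit g r" unfolding r_def using y_in by (rule orbit.step)
    hence e1: "(g ^^ j') r = g y" unfolding j'_def by (rule funpow_dist_prop)
    have "(g ^^ j) r = y" unfolding j_def r_def using y_in by (rule funpow_dist_prop)
    hence e2: "(g ^^ Suc j) r = g y" by simp
    have "j' mod card (orbit g r) = Suc j mod card (orbit g r)"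
      using orbit_funpow_cong[OF perm, of j' r "Suc j"] e1 e2 by simp
    moreover have "d dvd card (orbit g r)" unfolding r_def orep using dvd[OF that] .
    ultimately have "j' mod d = Suc j mod d" by (metis (no_types) mod_mod_cancel)
    thus ?thesis unfolding col_def rep_g j'_def j_def r_def by (simp add: mod_Suc_eq)
  qed
  define blk where "blk t = {y \<in> A. col y = t}" for t
  have g_blk: "g ` blk t = blk (Suc t mod d)" if "t < d" for t
  proof
    show "g ` blk t \<subseteq> blk (Suc t mod d)"
      unfolding blk_def using col_g gA by auto
  next
    show "blk (Suc t mod d) \<subseteq> g ` blk t"
    proof
      fix z assume z: "z \<in> blk (Suc t mod d)"
      hence "z \<in> g ` A" unfolding blk_def using gA by simp
      then obtain y where y: "y \<in> A" "z = g y" by blast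
      have "Suc (col y) mod d = Suc t mod d" using z y col_g unfolding blk_def by simp
      hence "col y = t" using col_lt[of y] that by (auto simp: mod_Suc split: if_splits)
      thus "z \<in> g ` blk t" using y unfolding blk_def by blast
    qed
  qed
  have fin_blk: "finite (blk t)" for t unfolding blk_def using fin by simp
  have card_blk: "t < d \<Longrightarrow> card (blk t) = card (blk 0)" for t
  proof (induction t)
    case (Suc t)
    have "blk (Suc t) = blk (Suc t mod d)" using Suc.prems by simp
    also have "\<dots> = g ` blk t" using g_blk[of t] Suc.prems by simp
    finally have "card (blk (Suc t)) = card (blk t)"
      using card_image[OF inj_on_subset[OF injg subset_UNIV]] by simp
    thus ?case using Suc by simp
  qed simp
  have Aun: "A = (\<Union>t\<in>{..<d}. blk t)" unfolding blk_def using col_lt by auto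
  have "card A = (\<Sum>t\<in>{..<d}. card (blk t))"
    by (subst Aun, rule card_UN_disjoint) (auto simp: blk_def fin)
  also have "\<dots> = (\<Sum>t\<in>{..<d}. card (blk 0))" by (rule sum.cong[OF refl], rule card_blk) simp
  also have "\<dots> = d * card (blk 0)" by simp
  finally have cA1: "card A = d * card (blk 0)" .
  have "card A = sum_mset (cycle_partition g A)" using cp_sum[OF perm fin inv] by simp
  also have "\<dots> = d * sum_mset Q" unfolding cp by (induction Q) (auto simp: algebra_simps)
  also have "\<dots> = d * m" using Qp unfolding is_int_partition_def by simp
  finally have "card (blk 0) = m" using cA1 d0 by simp
  hence cb: "t < d \<Longrightarrow> card (blk t) = m" for t using card_blk[of t] by (simp only:)
  have ne: "t < d \<Longrightarrow> blk t \<noteq> {}" for t using cb m0 by fastforce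
  define B where "B = blk ` {..<d}"
  have "partition_on A B" unfolding partition_on_def disjoint_def B_def
  proof (intro conjI ballI impI)
    show "\<Union>(blk ` {..<d}) = A" using Aun by simp
    show "{} \<notin> blk ` {..<d}" using ne by auto
  next
    fix a b assume "a \<in> blk ` {..<d}" "b \<in> blk ` {..<d}" "a \<noteq> b"
    thus "a \<inter> b = {}" unfolding blk_def by auto
  qed
  moreover have "card B = d"
  proof -
    have "inj_on blk {..<d}"
    proof (rule inj_onI)
      fix t s assume ts: "t \<in> {..<d}" "s \<in> {..<d}" "blk t = blk s"
      then obtain y where "y \<in> blk t" using ne by blast
      thus "t = s" using ts unfolding blk_def by auto
    qed
    thus ?thesis unfolding B_def by (simp add: card_image)
  qed
  moreover have "\<forall>b\<in>B. card b = m" unfolding B_def using cb by auto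
  moreover have "\<forall>b\<in>B. g ` b \<in> B" unfolding B_def using g_blk d0 by auto
  ultimately show ?thesis unfolding preserves_block_system_def by blast
qed



lemma funpow_image_Suc: "(g ^^ Suc i) ` b = g ` ((g ^^ i) ` b)"
  by (simp add: image_comp)

lemma funpow_image_add: "(g ^^ (i + j)) ` b = (g ^^ i) ` ((g ^^ j) ` b)"
  by (simp add: funpow_add image_comp)

lemma mult_div_mset: "(\<And>n. n \<in># P \<Longrightarrow> (d::nat) dvd n \<and> 0 < n) \<Longrightarrow> image_mset (\<lambda>x. d * (x div d)) P = P"
  by (induction P) (auto simp: dvd_mult_div_cancel)

lemma sum_mset_mult: "sum_mset (image_mset (\<lambda>x. d * x) Q) = d * sum_mset (Q :: nat multiset)"
  by (induction Q) (auto simp: algebra_simps)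

lemma fwd:
  assumes perm: "permutation g"
  shows "finite A \<Longrightarrow> partition_on A B \<Longrightarrow> (\<forall>b\<in>B. card b = m) \<Longrightarrow> (\<forall>b\<in>B. g ` b \<in> B)
         \<Longrightarrow> i_partition (card B) m (cycle_partition g A)"
proof (induction "card B" arbitrary: A B rule: less_induct)
  case less
  note finA = less.prems(1) and part = less.prems(2) and cardm = less.prems(3) and clos = less.prems(4)
  have injg: "inj g" using perm_inj[OF perm] .
  have subA: "X \<subseteq> A" if "X \<in> B" for X using part that unfolding partition_on_def by blast
  have neB: "X \<noteq> {}" if "X \<in> B" for X using part that unfolding partition_on_def by blast
  have eqB: "X = Y" if "X \<in> B" "Y \<in> B" "x \<in> X" "x \<in> Y" for X Y x
    using part that unfolding partition_on_def disjoint_def by blast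
  have UB: "\<Union>B = A" using part unfolding partition_on_def by blast
  have "B \<subseteq> Pow A" using subA by blast
  hence finB: "finite B" using finA finite_subset by blast
  show ?case
  proof (cases "B = {}")
    case True
    hence "A = {}" using UB by simp
    thus ?thesis using True ip_empty unfolding cycle_partition_def by simp
  next
    case False
    then obtain b where bB: "b \<in> B" by blast
    have invA: "g ` A \<subseteq> A"
    proof
      fix y assume "y \<in> g ` A"
      then obtain x where x: "x \<in> A" "y = g x" by blast
      then obtain X where X: "X \<in> B" "x \<in> X" using UB by blast
      hence "y \<in> g ` X" "g ` X \<in> B" using x clos by auto
      thus "y \<in> A" using subA by blast
    qed
    have pw: "(g ^^ i) ` b \<in> B" for i
    proof (induction i)
      case 0 thus ?case using bB by simp
    next
      case (Suc i) thus ?case using clos funpow_image_Suc[of i g b] by simp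
    qed
    have bk: "(g ^^ n) ` b = b" if "x \<in> b" "(g ^^ n) x = x" for n x
    proof -
      have "x \<in> (g ^^ n) ` b" using that by (metis imageI)
      thus ?thesis using eqB[OF pw bB _ that(1)] by blast
    qed
    have ex: "\<exists>n. 0 < n \<and> (g ^^ n) ` b = b"
    proof -
      obtain x where x: "x \<in> b" using neB[OF bB] by blast
      show ?thesis using orbit_period(1,2)[OF perm, where x=x] bk[OF x] by blast
    qed
    define d where "d = (LEAST n. 0 < n \<and> (g ^^ n) ` b = b)"
    have dprop: "0 < d" "(g ^^ d) ` b = b" using LeastI_ex[OF ex] unfolding d_def by auto
    have dmin: "(g ^^ n) ` b \<noteq> b" if "0 < n" "n < d" for n
      using not_less_Least[of n "\<lambda>n. 0 < n \<and> (g ^^ n) ` b = b"] that unfolding d_def by blast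
    have mult: "(g ^^ (q * d)) ` b = b" for q
    proof (induction q)
      case (Suc q)
      have "(g ^^ (Suc q * d)) ` b = (g ^^ d) ` ((g ^^ (q * d)) ` b)"
        using funpow_image_add[of d "q * d" g b] by (simp add: add.commute)
      thus ?case using Suc dprop by simp
    qed simp
    have dvd_of: "d dvd n" if "(g ^^ n) ` b = b" for n
    proof (rule ccontr)
      assume nd: "\<not> d dvd n"
      have "(g ^^ n) ` b = (g ^^ (n mod d + n div d * d)) ` b" by simp
      also have "\<dots> = (g ^^ (n mod d)) ` b" using funpow_image_add[of "n mod d" "n div d * d" g b] mult by simp
      finally have "(g ^^ (n mod d)) ` b = b" using that by simp
      moreover have "0 < n mod d" using nd by (simp add: dvd_eq_mod_eq_0)
      moreover have "n mod d < d" using dprop by simp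
      ultimately show False using dmin by blast
    qed
    have distinct: "i = j" if "i < d" "j < d" "(g ^^ i) ` b = (g ^^ j) ` b" for i j
    proof -
      have gen: "i = j" if "i \<le> j" "j < d" "(g ^^ i) ` b = (g ^^ j) ` b" for i j
      proof (rule ccontr)
        assume "i \<noteq> j"
        have "(g ^^ (d - j + i)) ` b = (g ^^ (d - j)) ` ((g ^^ i) ` b)" by (rule funpow_image_add)
        also have "\<dots> = (g ^^ (d - j)) ` ((g ^^ j) ` b)" using that(3) by simp
        also have "\<dots> = (g ^^ (d - j + j)) ` b" by (rule funpow_image_add[symmetric])
        also have "\<dots> = b" using that(2) dprop by simp
        finally have "d dvd (d - j + i)" by (rule dvd_of)
        moreover have "0 < d - j + i" "d - j + i < d" using that \<open>i \<noteq> j\<close> by auto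
        ultimately show False using nat_dvd_not_less by blast
      qed
      show ?thesis using gen[of i j] gen[of j i] that by (cases "i \<le> j") auto
    qed
    define Ob where "Ob = (\<lambda>i. (g ^^ i) ` b) ` {..<d}"
    have cardO: "card Ob = d" unfolding Ob_def
    proof (subst card_image)
      show "inj_on (\<lambda>i. (g ^^ i) ` b) {..<d}"
        by (rule inj_onI) (rule distinct, auto)
    qed simp
    have OB: "Ob \<subseteq> B" unfolding Ob_def using pw by blast
    define U where "U = \<Union>Ob"
    have UA: "U \<subseteq> A" unfolding U_def using OB subA by blast
    have finU: "finite U" using UA finA finite_subset by blast
    have finX: "finite X" if "X \<in> B" for X using subA[OF that] finA finite_subset by blast
    have cardU: "card U = d * m"
    proof -
      have "card U = (\<Sum>i\<in>{..<d}. card ((g ^^ i) ` b))" unfolding U_def Ob_def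
      proof (rule card_UN_disjoint)
        show "\<forall>i\<in>{..<d}. finite ((g ^^ i) ` b)" using finX pw by blast
        show "\<forall>i\<in>{..<d}. \<forall>j\<in>{..<d}. i \<noteq> j \<longrightarrow> (g ^^ i) ` b \<inter> (g ^^ j) ` b = {}"
        proof (intro ballI impI)
          fix i j assume ij: "i \<in> {..<d}" "j \<in> {..<d}" "i \<noteq> j"
          show "(g ^^ i) ` b \<inter> (g ^^ j) ` b = {}"
          proof (rule ccontr)
            assume "(g ^^ i) ` b \<inter> (g ^^ j) ` b \<noteq> {}"
            then obtain x where "x \<in> (g ^^ i) ` b" "x \<in> (g ^^ j) ` b" by blast
            hence "(g ^^ i) ` b = (g ^^ j) ` b" by (rule eqB[OF pw pw])
            hence "i = j" using ij by (intro distinct) auto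
            thus False using ij(3) by blast
          qed
        qed
      qed simp
      also have "\<dots> = d * m"
      proof -
        have "\<And>i. card ((g ^^ i) ` b) = m" using cardm pw by blast
        thus ?thesis by simp
      qed
      finally show ?thesis .
    qed
    have gU: "g ` U \<subseteq> U"
    proof
      fix y assume "y \<in> g ` U"
      then obtain x i where xi: "i < d" "x \<in> (g ^^ i) ` b" "y = g x" unfolding U_def Ob_def by blast
      hence y: "y \<in> (g ^^ Suc i) ` b" using funpow_image_Suc[of i g b] by simp
      show "y \<in> U"
      proof (cases "Suc i < d")
        case True thus ?thesis using y unfolding U_def Ob_def by blast
      next
        case False
        hence "Suc i = d" using xi by simp
        hence "y \<in> (g ^^ 0) ` b" using y dprop by simp
        thus ?thesis using dprop unfolding U_def Ob_def by blast
      qed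
    qed
    have gU_eq: "g ` U = U" using endo_inj_surj[OF finU gU] injg inj_on_subset by blast
    have inv_rest: "g ` (A - U) \<subseteq> A - U"
    proof
      fix z assume "z \<in> g ` (A - U)"
      then obtain y where y: "y \<in> A" "y \<notin> U" "z = g y" by blast
      have "z \<in> A" using y invA by blast
      moreover have "z \<notin> U"
      proof
        assume "z \<in> U"
        then obtain u where "u \<in> U" "z = g u" using gU_eq by blast
        hence "y = u" using y injg unfolding inj_def by blast
        thus False using y \<open>u \<in> U\<close> by blast
      qed
      ultimately show "z \<in> A - U" by blast
    qed
    have dvd_orbit: "d dvd card (orbit g x)" if xU: "x \<in> U" for x
    proof -
      obtain i z where iz: "z \<in> b" "x = (g ^^ i) z" using xU unfolding U_def Ob_def by blast
      have "x \<in> orbit g z" using funpow_in_orbit[OF permutation_self_in_orbit[OF perm]] iz by simp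
      hence oe: "orbit g x = orbit g z" by (rule orbit_eq_of_mem[OF perm])
      have "(g ^^ card (orbit g z)) ` b = b" using bk[OF iz(1) orbit_period(2)[OF perm]] .
      thus ?thesis using oe dvd_of by simp
    qed
    have ic: "ic_partition d m (cycle_partition g U)"
    proof -
      define Q where "Q = image_mset (\<lambda>n. n div d) (cycle_partition g U)"
      have memU: "\<And>n. n \<in># cycle_partition g U \<Longrightarrow> d dvd n \<and> 0 < n"
      proof -
        fix n assume "n \<in># cycle_partition g U"
        then obtain x where x: "x \<in> U" "n = card (orbit g x)" using cp_mem[OF finU] by blast
        show "d dvd n \<and> 0 < n" using x dvd_orbit[OF x(1)] orbit_period(1)[OF perm, where x=x] by simp
      qed
      have eq: "image_mset (\<lambda>x. d * x) Q = cycle_partition g U"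
        unfolding Q_def image_mset.compositionality o_def using memU by (rule mult_div_mset)
      have pos: "\<forall>x\<in>#Q. 0 < x" unfolding Q_def
      proof
        fix y assume "y \<in># image_mset (\<lambda>n. n div d) (cycle_partition g U)"
        then obtain n where n: "n \<in># cycle_partition g U" "y = n div d" by auto
        obtain q where q: "n = d * q" using memU[OF n(1)] by (auto elim: dvdE)
        have "0 < q" using memU[OF n(1)] q by (cases q) auto
        thus "0 < y" using n(2) q dprop(1) by simp
      qed
      have "d * sum_mset Q = sum_mset (image_mset (\<lambda>x. d * x) Q)" by (rule sum_mset_mult[symmetric])
      also have "\<dots> = card U" unfolding eq using cp_sum[OF perm finU gU] .
      finally have "sum_mset Q = m" using cardU dprop(1) by simp
      thus ?thesis unfolding ic_partition_def is_int_partition_def using pos eq by auto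
    qed
    have "b \<in> Ob" unfolding Ob_def using dprop by (intro image_eqI[of _ _ 0]) auto
    hence "U \<noteq> {}" using neB[OF bB] unfolding U_def by blast
    hence "cycle_partition g U \<noteq> {#}" using cp_empty[OF finU] by simp
    hence ipU: "i_partition d m (cycle_partition g U)" using ip_single dprop(1) ic by blast
    define B' where "B' = B - Ob"
    have disjU: "X \<inter> U = {}" if "X \<in> B'" for X
    proof (rule ccontr)
      assume "X \<inter> U \<noteq> {}"
      then obtain x Y where "x \<in> X" "Y \<in> Ob" "x \<in> Y" unfolding U_def by blast
      hence "X = Y" using eqB that OB unfolding B'_def by blast
      thus False using that \<open>Y \<in> Ob\<close> unfolding B'_def by blast
    qed
    have part': "partition_on (A - U) B'" unfolding partition_on_def
    proof (intro conjI)
      show "\<Union>B' = A - U"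
      proof
        show "\<Union>B' \<subseteq> A - U" using disjU subA unfolding B'_def by blast
        show "A - U \<subseteq> \<Union>B'"
        proof
          fix y assume y: "y \<in> A - U"
          then obtain X where X: "X \<in> B" "y \<in> X" using UB by blast
          have "X \<notin> Ob" using X y unfolding U_def by blast
          thus "y \<in> \<Union>B'" using X unfolding B'_def by blast
        qed
      qed
      show "disjoint B'" using part unfolding partition_on_def B'_def
        by (meson Diff_subset pairwise_subset)
      show "{} \<notin> B'" using neB unfolding B'_def by blast
    qed
    have cardm': "\<forall>X\<in>B'. card X = m" using cardm unfolding B'_def by blast
    have clos': "\<forall>X\<in>B'. g ` X \<in> B'"
    proof
      fix X assume X: "X \<in> B'"
      have gXB: "g ` X \<in> B" using X clos unfolding B'_def by blast
      have "X \<subseteq> A - U" using X disjU subA unfolding B'_def by blast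
      hence "g ` X \<subseteq> A - U" using inv_rest by blast
      moreover have "g ` X \<noteq> {}" using neB X unfolding B'_def by blast
      ultimately have "g ` X \<notin> Ob" unfolding U_def by blast
      thus "g ` X \<in> B'" using gXB unfolding B'_def by blast
    qed
    have finO: "finite Ob" unfolding Ob_def by simp
    have cB: "card B = d + card B'"
      unfolding B'_def using card_Diff_subset[OF finO OB] card_mono[OF finB OB] cardO by simp
    have "card B' < card B" using cB dprop(1) by simp
    moreover have "finite (A - U)" using finA by simp
    ultimately have ipR: "i_partition (card B') m (cycle_partition g (A - U))"
      using less.hyps part' cardm' clos' by blast
    have "A = U \<union> (A - U)" using UA by blast
    hence "cycle_partition g A = cycle_partition g U + cycle_partition g (A - U)"
      using cp_union[OF perm finU _ _ gU inv_rest] finA by (metis Diff_disjoint finite_Diff)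
    thus ?thesis using ip_add[OF ipU ipR] cB by simp
  qed
qed



lemma split_mset_set:
  assumes fin: "finite S" and eq: "image_mset f (mset_set S) = M1 + M2"
  shows "\<exists>S1\<subseteq>S. image_mset f (mset_set S1) = M1 \<and> image_mset f (mset_set (S - S1)) = M2"
proof -
  obtain B' C' where BC: "mset_set S = B' + C'" "M1 = image_mset f B'" "M2 = image_mset f C'"
    using image_mset_eq_plusD[OF eq] by blast
  define S1 where "S1 = set_mset B'"
  have sub: "S1 \<subseteq> S" unfolding S1_def using BC(1) fin
    by (metis Un_iff elem_mset_set set_mset_union subsetI)
  have "count B' x \<le> 1" for x
  proof -
    have "count B' x \<le> count (mset_set S) x" using BC(1) by simp
    also have "\<dots> \<le> 1" by (simp add: count_mset_set')
    finally show ?thesis .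
  qed
  hence B'eq: "mset_set S1 = B'" unfolding S1_def
  proof (intro multiset_eqI)
    fix x assume le: "\<And>x. count B' x \<le> 1"
    show "count (mset_set (set_mset B')) x = count B' x"
    proof (cases "x \<in># B'")
      case True
      hence "0 < count B' x" by simp
      hence "count B' x = 1" using le[of x] by linarith
      thus ?thesis using True by (simp add: count_mset_set')
    next
      case False thus ?thesis by (simp add: count_mset_set' count_eq_zero_iff)
    qed
  qed
  have "mset_set (S - S1) = mset_set S - mset_set S1" by (rule mset_set_Diff[OF fin sub])
  also have "\<dots> = C'" using BC(1) B'eq by simp
  finally show ?thesis using sub B'eq BC by blast
qed

lemma bwd:
  assumes perm: "permutation g" and m0: "0 < m"
  shows "(\<forall>c\<in>#C. snd c \<noteq> {#} \<and> ic_partition (fst c) m (snd c)) \<Longrightarrow> (\<forall>c\<in>#C. 0 < fst c)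
    \<Longrightarrow> finite A \<Longrightarrow> g ` A \<subseteq> A \<Longrightarrow> cycle_partition g A = sum_mset (image_mset snd C)
    \<Longrightarrow> preserves_block_system g A (sum_mset (image_mset fst C)) m"
proof (induction C arbitrary: A)
  case empty
  hence "A = {}" using cp_empty[of A g] by simp
  thus ?case using pbs_empty by simp
next
  case (add c C)
  note finA = add.prems(3) and invA = add.prems(4)
  define S where "S = orbit g ` A"
  have finS: "finite S" unfolding S_def using finA by simp
  have "image_mset card (mset_set S) = snd c + sum_mset (image_mset snd C)"
    using add.prems(5) unfolding cycle_partition_def S_def by simp
  then obtain S1 where S1: "S1 \<subseteq> S" "image_mset card (mset_set S1) = snd c"
      "image_mset card (mset_set (S - S1)) = sum_mset (image_mset snd C)"
    using split_mset_set[OF finS] by blast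
  have Xorb: "orbit g y = X" if XS: "X \<in> S" and yX: "y \<in> X" for X y
  proof -
    obtain x where "x \<in> A" "X = orbit g x" using XS unfolding S_def by blast
    thus ?thesis using orbit_eq_of_mem[OF perm] yX by simp
  qed
  have XA: "X \<subseteq> A" if "X \<in> S" for X
    using that orbit_subset_inv[OF invA] unfolding S_def by blast
  have selfin: "y \<in> orbit g y" for y using permutation_self_in_orbit[OF perm] .
  define A1 where "A1 = \<Union>S1"
  define A2 where "A2 = A - A1"
  have A1A: "A1 \<subseteq> A" unfolding A1_def using S1(1) XA by blast
  have o1: "orbit g ` A1 = S1"
  proof
    show "orbit g ` A1 \<subseteq> S1"
    proof
      fix Y assume "Y \<in> orbit g ` A1"
      then obtain y X where "X \<in> S1" "y \<in> X" "Y = orbit g y" unfolding A1_def by blast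
      thus "Y \<in> S1" using Xorb S1(1) by blast
    qed
    show "S1 \<subseteq> orbit g ` A1"
    proof
      fix X assume X: "X \<in> S1"
      then obtain x where x: "x \<in> A" "X = orbit g x" using S1(1) unfolding S_def by blast
      have "x \<in> X" using x(2) selfin[of x] by simp
      hence "x \<in> A1" using X unfolding A1_def by blast
      thus "X \<in> orbit g ` A1" using x by blast
    qed
  qed
  have o2: "orbit g ` A2 = S - S1"
  proof
    show "orbit g ` A2 \<subseteq> S - S1"
    proof
      fix Y assume "Y \<in> orbit g ` A2"
      then obtain y where y: "y \<in> A" "y \<notin> A1" "Y = orbit g y" unfolding A2_def by blast
      have "Y \<in> S" using y unfolding S_def by blast
      moreover have "y \<in> Y" using y(3) selfin[of y] by simp
      moreover have "Y \<notin> S1" using y(2) \<open>y \<in> Y\<close> unfolding A1_def by blast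
      ultimately show "Y \<in> S - S1" by blast
    qed
    show "S - S1 \<subseteq> orbit g ` A2"
    proof
      fix X assume X: "X \<in> S - S1"
      then obtain x where x: "x \<in> A" "X = orbit g x" unfolding S_def by blast
      have "x \<notin> A1"
      proof
        assume "x \<in> A1"
        then obtain Y where "Y \<in> S1" "x \<in> Y" unfolding A1_def by blast
        hence "orbit g x = Y" using Xorb S1(1) by blast
        thus False using X x \<open>Y \<in> S1\<close> by blast
      qed
      thus "X \<in> orbit g ` A2" using x unfolding A2_def by blast
    qed
  qed
  have inv1: "g ` A1 \<subseteq> A1"
  proof
    fix z assume "z \<in> g ` A1"
    then obtain y X where yX: "X \<in> S1" "y \<in> X" "z = g y" unfolding A1_def by blast
    have "orbit g y = X" using Xorb S1(1) yX by blast
    moreover have "g y \<in> orbit g y" by (rule orbit.step[OF selfin])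
    ultimately have "z \<in> X" using yX(3) by simp
    thus "z \<in> A1" using yX unfolding A1_def by blast
  qed
  have inv2: "g ` A2 \<subseteq> A2"
  proof
    fix z assume "z \<in> g ` A2"
    then obtain y where y: "y \<in> A" "y \<notin> A1" "z = g y" unfolding A2_def by blast
    have "z \<in> A" using y invA by blast
    moreover have "z \<notin> A1"
    proof
      assume "z \<in> A1"
      then obtain Y where Y: "Y \<in> S1" "z \<in> Y" unfolding A1_def by blast
      hence "orbit g z = Y" using Xorb S1(1) by blast
      hence "orbit g y = Y" using permutation_orbit_step[OF perm, of y] y(3) by simp
      hence "y \<in> Y" using selfin[of y] by simp
      hence "y \<in> A1" using Y unfolding A1_def by blast
      thus False using y by blast
    qed
    ultimately show "z \<in> A2" unfolding A2_def by blast
  qed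
  have finA1: "finite A1" using A1A finA finite_subset by blast
  have finA2: "finite A2" unfolding A2_def using finA by simp
  have cp1: "cycle_partition g A1 = snd c" unfolding cycle_partition_def o1 using S1(2) .
  have cp2: "cycle_partition g A2 = sum_mset (image_mset snd C)"
    unfolding cycle_partition_def o2 using S1(3) .
  have cc: "snd c \<noteq> {#} \<and> ic_partition (fst c) m (snd c)" "0 < fst c" using add.prems(1,2) by auto
  obtain Q where Q: "is_int_partition m Q" "snd c = image_mset (\<lambda>x. fst c * x) Q"
    using cc(1) unfolding ic_partition_def by blast
  have p1: "preserves_block_system g A1 (fst c) m"
  proof (rule single_cluster_blocks[OF perm finA1 inv1 cc(2) m0 _ Q(1)])
    show "cycle_partition g A1 = image_mset (\<lambda>x. fst c * x) Q" using cp1 Q(2) by simp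
  qed
  have p2: "preserves_block_system g A2 (sum_mset (image_mset fst C)) m"
  proof -
    have h1: "\<forall>c\<in>#C. snd c \<noteq> {#} \<and> ic_partition (fst c) m (snd c)" using add.prems(1) by simp
    have h2: "\<forall>c\<in>#C. 0 < fst c" using add.prems(2) by simp
    show ?thesis by (rule add.IH[OF h1 h2 finA2 inv2 cp2])
  qed
  have AU: "A1 \<union> A2 = A" unfolding A2_def using A1A by blast
  have dj: "A1 \<inter> A2 = {}" unfolding A2_def by blast
  have "preserves_block_system g (A1 \<union> A2) (fst c + sum_mset (image_mset fst C)) m"
    by (rule pbs_union[OF finA1 finA2 dj p1 p2])
  thus ?case unfolding AU by simp
qed

theorem mainTheorem2:
  fixes k m :: nat and g :: "nat \<Rightarrow> nat"
  assumes "k > 1" and "m > 1" and "g permutes {1..k*m}"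
  shows "preserves_block_system g {1..k*m} k m \<longleftrightarrow>
         i_partition k m (cycle_partition g {1..k*m})"
proof -
  define A where "A = {1..k*m}"
  have perm: "permutation g" unfolding permutation_permutes
    by (rule exI[of _ "{1..k*m}"]) (use assms(3) in simp)
  have finA: "finite A" unfolding A_def by simp
  have gA: "g ` A = A" unfolding A_def using permutes_image[OF assms(3)] .
  have "preserves_block_system g A k m \<longleftrightarrow> i_partition k m (cycle_partition g A)"
  proof
    assume "preserves_block_system g A k m"
    then obtain B where B: "partition_on A B" "card B = k" "\<forall>b\<in>B. card b = m" "\<forall>b\<in>B. g ` b \<in> B"
      unfolding preserves_block_system_def by blast
    show "i_partition k m (cycle_partition g A)" using fwd[OF perm finA B(1,3,4)] B(2) by simp
  next
    assume "i_partition k m (cycle_partition g A)"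
    then obtain C where C: "\<forall>c\<in>#C. snd c \<noteq> {#} \<and> ic_partition (fst c) m (snd c)"
      "is_int_partition k (image_mset fst C)" "sum_mset (image_mset snd C) = cycle_partition g A"
      unfolding i_partition_def by blast
    have pos: "\<forall>c\<in>#C. 0 < fst c" using C(2) unfolding is_int_partition_def by auto
    have sk: "sum_mset (image_mset fst C) = k" using C(2) unfolding is_int_partition_def by auto
    show "preserves_block_system g A k m"
    proof -
      have m0: "0 < m" using assms(2) by simp
      have "g ` A \<subseteq> A" using gA by simp
      from bwd[OF perm m0 C(1) pos finA this C(3)[symmetric]] show ?thesis unfolding sk .
    qed
  qed
  thus ?thesis unfolding A_def .
qed


end
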